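(* Assume (A1) and (A2) below. Then for any $s\in\mathcal S$ and policy $\pi$, $$\mathbb{E}_{p\sim\Phi_t}\Big[\mathbb{V}_{a,s'\sim\pi,p}\big[V^{\pi,p}(s')\big]-\mathbb{V}_{a,s'\sim\pi,p}\big[\bar V^\pi_t(s')\big]\Big]\ge 0.$$
   Context: Let $\mathcal S$ be a finite state space, $\mathcal A$ a finite action space, $r:\mathcal S\times\mathcal A\to\mathbb R$ a known bounded (deterministic) reward function and $\gamma\in[0,1)$ a discount factor. A transition function $p$ assigns to each $(s,a)$ a probability distribution $p(\cdot\mid s,a)$ on $\mathcal S$. A policy $\pi$ gives distributions $\pi(\cdot\mid s)$ on $\mathcal A$. For a transition function $p$, the value function is $V^{\pi,p}(s)=\mathbb E\big[\sum_{h\ge 0}\gamma^h r(s_h,a_h)\mid s_0=s\big]$ with $a_h\sim\pi(\cdot\mid s_h)$, $s_{h+1}\sim p(\cdot\mid s_h,a_h)$. The transition function $p$ is a random variable with distribution $\Phi_t$, and $\bar V^\pi_t(s)=\mathbb E_{p\sim\Phi_t}[V^{\pi,p}(s)]$. For a transition function $q$ and a function $f$ on $\mathcal S$, $\mathbb V_{a,s'\sim\pi,q}[f(s')]$ denotes the variance of $f(s')$ when $a\sim\pi(\cdot\mid s)$ and $s'\sim q(\cdot\mid s,a)$. Assumptions: (A1) (independent transitions) $p(s'\mid x,a)$ and $p(s'\mid y,a)$ are independent random variables if $x\neq y$; (A2) (acyclic MDP) the MDP is a directed acyclic graph, i.e., states are not visited more than once in any given episode. *)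

theory Defs
  imports "HOL-Probability.Probability"
begin

text \<open>A transition function is q :: 's => 'a => 's => real, q x a y = p(y | x, a).
  A policy is pi :: 's => 'a => real, pi s a = pi(a | s).\<close>

definition valid_policy :: "('s::finite \<Rightarrow> 'a::finite \<Rightarrow> real) \<Rightarrow> bool" where
  "valid_policy \<pi> \<longleftrightarrow> (\<forall>s a. 0 \<le> \<pi> s a) \<and> (\<forall>s. (\<Sum>a\<in>UNIV. \<pi> s a) = 1)"

definition valid_transition :: "('s::finite \<Rightarrow> 'a::finite \<Rightarrow> 's \<Rightarrow> real) \<Rightarrow> bool" where
  "valid_transition q \<longleftrightarrow> (\<forall>x a y. 0 \<le> q x a y) \<and> (\<forall>x a. (\<Sum>y\<in>UNIV. q x a y) = 1)"

definition r_pi :: "('s::finite \<Rightarrow> 'a::finite \<Rightarrow> real) \<Rightarrow> ('s \<Rightarrow> 'a \<Rightarrow> real) \<Rightarrow> 's \<Rightarrow> real" where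
  "r_pi r \<pi> s = (\<Sum>a\<in>UNIV. \<pi> s a * r s a)"

definition step_op :: "('s::finite \<Rightarrow> 'a::finite \<Rightarrow> real) \<Rightarrow> ('s \<Rightarrow> 'a \<Rightarrow> 's \<Rightarrow> real)
    \<Rightarrow> ('s \<Rightarrow> real) \<Rightarrow> 's \<Rightarrow> real" where
  "step_op \<pi> q f s = (\<Sum>a\<in>UNIV. \<Sum>s'\<in>UNIV. \<pi> s a * q s a s' * f s')"

text \<open>Value function V^{pi,q}(s) = E[ sum_h gamma^h r(s_h,a_h) | s_0 = s ]
  = sum_h gamma^h E[r(s_h,a_h) | s_0 = s].\<close>
definition value_fun :: "('s::finite \<Rightarrow> 'a::finite \<Rightarrow> real) \<Rightarrow> real \<Rightarrow>
    ('s \<Rightarrow> 'a \<Rightarrow> real) \<Rightarrow> ('s \<Rightarrow> 'a \<Rightarrow> 's \<Rightarrow> real) \<Rightarrow> 's \<Rightarrow> real" where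
  "value_fun r \<gamma> \<pi> q s = (\<Sum>h. \<gamma> ^ h * (((step_op \<pi> q) ^^ h) (r_pi r \<pi>)) s)"

definition var_next :: "('s::finite \<Rightarrow> 'a::finite \<Rightarrow> real) \<Rightarrow> ('s \<Rightarrow> 'a \<Rightarrow> 's \<Rightarrow> real)
    \<Rightarrow> ('s \<Rightarrow> real) \<Rightarrow> 's \<Rightarrow> real" where
  "var_next \<pi> q f s =
     (\<Sum>a\<in>UNIV. \<Sum>s'\<in>UNIV. \<pi> s a * q s a s' * (f s' - step_op \<pi> q f s)\<^sup>2)"

text \<open>(A1) independent transitions: the random rows P(.|x,.) for distinct
  states x are (mutually) independent random variables.\<close>
definition indep_transitions :: "'w measure \<Rightarrow> ('w \<Rightarrow> 's::finite \<Rightarrow> 'a::finite \<Rightarrow> 's \<Rightarrow> real) \<Rightarrow> bool" where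
  "indep_transitions M P \<longleftrightarrow>
     prob_space.indep_vars M (\<lambda>_. PiM UNIV (\<lambda>_. PiM UNIV (\<lambda>_. borel))) (\<lambda>x \<omega>. P \<omega> x) UNIV"

text \<open>(A2) acyclic MDP: there is a ranking of the states such that every transition
  of positive probability (for every realisation of P) strictly increases the rank,
  except self-loops at terminal (deterministically absorbing) states.\<close>
definition terminal_state :: "'w measure \<Rightarrow> ('w \<Rightarrow> 's \<Rightarrow> 'a \<Rightarrow> 's \<Rightarrow> real) \<Rightarrow> 's \<Rightarrow> bool" where
  "terminal_state M P x \<longleftrightarrow> (\<forall>\<omega>\<in>space M. \<forall>a. P \<omega> x a x = 1)"

definition acyclic_mdp :: "'w measure \<Rightarrow> ('w \<Rightarrow> 's \<Rightarrow> 'a \<Rightarrow> 's \<Rightarrow> real) \<Rightarrow> bool" where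
  "acyclic_mdp M P \<longleftrightarrow> (\<exists>\<rho> :: 's \<Rightarrow> nat. \<forall>\<omega>\<in>space M. \<forall>x a y.
      0 < P \<omega> x a y \<longrightarrow> \<rho> x < \<rho> y \<or> (y = x \<and> terminal_state M P x))"

end

theory Submission
  imports Defs
begin


lemma step_pow_meas:
  assumes q: "\<And>x a y. (\<lambda>\<omega>. q \<omega> x a y) \<in> borel_measurable N"
  shows "(\<lambda>\<omega>. ((step_op \<pi> (q \<omega>)) ^^ h) f x) \<in> borel_measurable N"
proof (induction h arbitrary: x)
  case 0 then show ?case by simp
next
  case (Suc h)
  have "(\<lambda>\<omega>. ((step_op \<pi> (q \<omega>)) ^^ Suc h) f x) =
     (\<lambda>\<omega>. \<Sum>a\<in>UNIV. \<Sum>s'\<in>UNIV. \<pi> x a * q \<omega> x a s' * ((step_op \<pi> (q \<omega>)) ^^ h) f s')"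
    by (simp add: step_op_def)
  also have "\<dots> \<in> borel_measurable N" using Suc q by measurable
  finally show ?case .
qed

lemma value_fun_meas:
  assumes q: "\<And>x a y. (\<lambda>\<omega>. q \<omega> x a y) \<in> borel_measurable N"
  shows "(\<lambda>\<omega>. value_fun r \<gamma> \<pi> (q \<omega>) y) \<in> borel_measurable N"
  unfolding value_fun_def
  by (intro borel_measurable_suminf borel_measurable_times borel_measurable_const step_pow_meas q)

lemma policy_le1: "valid_policy \<pi> \<Longrightarrow> \<pi> s a \<le> 1"
  unfolding valid_policy_def
  using member_le_sum[of a UNIV "\<pi> s"] by auto

lemma trans_le1: "valid_transition q \<Longrightarrow> q x a y \<le> 1"
  unfolding valid_transition_def
  using member_le_sum[of y UNIV "q x a"] by auto

lemma step_bound: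
  assumes "valid_policy \<pi>" "valid_transition q" "\<And>y. \<bar>f y\<bar> \<le> B"
  shows "\<bar>step_op \<pi> q f x\<bar> \<le> B"
proof -
  have "\<bar>step_op \<pi> q f x\<bar> \<le> (\<Sum>a\<in>UNIV. \<Sum>s'\<in>UNIV. \<bar>\<pi> x a * q x a s' * f s'\<bar>)"
    unfolding step_op_def by (rule order_trans[OF sum_abs] sum_mono sum_abs)+
  also have "\<dots> \<le> (\<Sum>a\<in>UNIV. \<Sum>s'\<in>UNIV. \<pi> x a * q x a s' * B)"
    using assms unfolding valid_policy_def valid_transition_def
    by (intro sum_mono) (simp add: abs_mult mult_left_mono)
  also have "\<dots> = (\<Sum>a\<in>UNIV. \<pi> x a * (\<Sum>s'\<in>UNIV. q x a s') * B)"
    by (simp add: sum_distrib_left sum_distrib_right mult.assoc)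
  also have "\<dots> = B" using assms unfolding valid_policy_def valid_transition_def
    by (simp add: sum_distrib_right[symmetric])
  finally show ?thesis .
qed

definition rbound :: "('s::finite \<Rightarrow> 'a::finite \<Rightarrow> real) \<Rightarrow> real" where
  "rbound r = (\<Sum>x\<in>UNIV. \<Sum>a\<in>UNIV. \<bar>r x a\<bar>)"

lemma r_pi_bound:
  assumes "valid_policy \<pi>"
  shows "\<bar>r_pi r \<pi> x\<bar> \<le> rbound r"
proof -
  have "\<bar>r_pi r \<pi> x\<bar> \<le> (\<Sum>a\<in>UNIV. \<bar>\<pi> x a * r x a\<bar>)"
    unfolding r_pi_def by (rule sum_abs)
  also have "\<dots> \<le> (\<Sum>a\<in>UNIV. \<bar>r x a\<bar>)"
    using assms policy_le1[OF assms] unfolding valid_policy_def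
    by (intro sum_mono) (simp add: abs_mult mult_left_le_one_le)
  also have "\<dots> \<le> rbound r" unfolding rbound_def
    by (rule member_le_sum[where f="\<lambda>x. \<Sum>a\<in>UNIV. \<bar>r x a\<bar>"]) (auto intro: sum_nonneg)
  finally show ?thesis .
qed

lemma pow_bound:
  assumes "valid_policy \<pi>" "valid_transition q"
  shows "\<bar>((step_op \<pi> q) ^^ h) (r_pi r \<pi>) x\<bar> \<le> rbound r"
proof (induction h arbitrary: x)
  case 0 then show ?case using r_pi_bound[OF assms(1)] by simp
next
  case (Suc h) then show ?case using step_bound[OF assms] by simp
qed

lemma value_fun_bound:
  assumes "valid_policy \<pi>" "valid_transition q" "0 \<le> \<gamma>" "\<gamma> < 1"
  shows "\<bar>value_fun r \<gamma> \<pi> q x\<bar> \<le> rbound r / (1 - \<gamma>)"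
proof -
  let ?f = "\<lambda>h. \<gamma> ^ h * ((step_op \<pi> q) ^^ h) (r_pi r \<pi>) x"
  have g: "summable (\<lambda>h. \<gamma> ^ h * rbound r)"
    using assms by (intro summable_mult2 summable_geometric) auto
  have b: "norm (?f h) \<le> \<gamma> ^ h * rbound r" for h
    using pow_bound[OF assms(1,2)] assms(3) by (simp add: abs_mult mult_left_mono)
  have s: "summable (\<lambda>h. norm (?f h))"
    by (rule summable_comparison_test'[OF g]) (use b in simp)
  have "\<bar>value_fun r \<gamma> \<pi> q x\<bar> \<le> (\<Sum>h. norm (?f h))"
    unfolding value_fun_def using summable_norm[OF s] by simp
  also have "\<dots> \<le> (\<Sum>h. \<gamma> ^ h * rbound r)"
    by (rule suminf_le[OF b s g])
  also have "\<dots> = rbound r / (1 - \<gamma>)"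
    using assms by (simp add: suminf_mult2[symmetric, OF summable_geometric] suminf_geometric)
  finally show ?thesis .
qed



lemma step_pow_agree:
  assumes "\<forall>x\<in>U. q x = q' x" "\<forall>x\<in>U. \<forall>a y. q x a y \<noteq> 0 \<longrightarrow> y \<in> U" "x \<in> U"
  shows "((step_op \<pi> q)^^h) f x = ((step_op \<pi> q')^^h) f x"
  using assms(3)
proof (induction h arbitrary: x)
  case 0 then show ?case by simp
next
  case (Suc h)
  have eq: "\<pi> x a * q x a y * ((step_op \<pi> q)^^h) f y = \<pi> x a * q' x a y * ((step_op \<pi> q')^^h) f y" for a y
  proof (cases "q x a y = 0")
    case True then show ?thesis using assms(1) Suc.prems by simp
  next
    case False then show ?thesis using assms Suc by auto
  qed
  have "(\<Sum>a\<in>UNIV. \<Sum>y\<in>UNIV. \<pi> x a * q x a y * ((step_op \<pi> q)^^h) f y) = (\<Sum>a\<in>UNIV. \<Sum>y\<in>UNIV. \<pi> x a * q' x a y * ((step_op \<pi> q')^^h) f y)"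
    by (rule sum.cong[OF refl], rule sum.cong[OF refl], rule eq)
  moreover have "((step_op \<pi> q)^^Suc h) f x = (\<Sum>a\<in>UNIV. \<Sum>y\<in>UNIV. \<pi> x a * q x a y * ((step_op \<pi> q)^^h) f y)"
    unfolding funpow.simps comp_def by (rule step_op_def)
  moreover have "((step_op \<pi> q')^^Suc h) f x = (\<Sum>a\<in>UNIV. \<Sum>y\<in>UNIV. \<pi> x a * q' x a y * ((step_op \<pi> q')^^h) f y)"
    unfolding funpow.simps comp_def by (rule step_op_def)
  ultimately show ?case by simp
qed

lemma value_fun_agree:
  assumes "\<forall>x\<in>U. q x = q' x" "\<forall>x\<in>U. \<forall>a y. q x a y \<noteq> 0 \<longrightarrow> y \<in> U" "x \<in> U"
  shows "value_fun r \<gamma> \<pi> q x = value_fun r \<gamma> \<pi> q' x"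
  unfolding value_fun_def using step_pow_agree[OF assms] by simp

definition vr :: "('s::finite \<Rightarrow> real) \<Rightarrow> ('s \<Rightarrow> real) \<Rightarrow> real" where
  "vr m f = (\<Sum>y\<in>UNIV. m y * (f y - (\<Sum>z\<in>UNIV. m z * f z))\<^sup>2)"

lemma step_op_mu: "step_op \<pi> q f s = (\<Sum>y\<in>UNIV. (\<Sum>a\<in>UNIV. \<pi> s a * q s a y) * f y)"
  unfolding step_op_def by (subst sum.swap) (simp add: sum_distrib_right)

lemma var_next_vr: "var_next \<pi> q f s = vr (\<lambda>y. \<Sum>a\<in>UNIV. \<pi> s a * q s a y) f"
  unfolding var_next_def vr_def step_op_mu[symmetric]
  by (subst sum.swap) (simp add: sum_distrib_right)

lemma vr_nonneg: "(\<And>y. 0 \<le> m y) \<Longrightarrow> 0 \<le> vr m f"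
  unfolding vr_def by (intro sum_nonneg) simp

lemma vr_alt:
  assumes "sum m UNIV = 1"
  shows "vr m f = (\<Sum>y\<in>UNIV. m y * (f y)\<^sup>2) - (\<Sum>y\<in>UNIV. m y * f y)\<^sup>2"
proof -
  let ?c = "\<Sum>y\<in>UNIV. m y * f y"
  have "vr m f = (\<Sum>y\<in>UNIV. m y * (f y)\<^sup>2 - 2 * ?c * (m y * f y) + ?c\<^sup>2 * m y)"
    unfolding vr_def by (intro sum.cong refl) (simp add: power2_eq_square algebra_simps)
  also have "\<dots> = (\<Sum>y\<in>UNIV. m y * (f y)\<^sup>2) - 2 * ?c * ?c + ?c\<^sup>2 * sum m UNIV"
    by (simp add: sum.distrib sum_subtractf sum_distrib_left)
  also have "\<dots> = (\<Sum>y\<in>UNIV. m y * (f y)\<^sup>2) - ?c\<^sup>2" using assms by (simp add: power2_eq_square)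
  finally show ?thesis .
qed

lemma sq_sum: "(\<Sum>y\<in>UNIV. m y * f y)\<^sup>2 = (\<Sum>y\<in>UNIV. \<Sum>z\<in>(UNIV::'s::finite set). m y * m z * (f y * f z::real))"
  unfolding power2_eq_square sum_product by (rule sum.cong[OF refl], rule sum.cong[OF refl]) (simp add: mult_ac)

lemma vr_decomp:
  assumes "sum m UNIV = 1"
  shows "vr m (\<lambda>y. a y + d y) = vr m a + vr m d +
     (\<Sum>y\<in>UNIV. (2 * m y * a y - 2 * (\<Sum>z\<in>UNIV. m z * a z) * m y) * d y)"
proof -
  have e1: "(\<Sum>y\<in>UNIV. m y * (a y + d y)\<^sup>2) = (\<Sum>y\<in>UNIV. m y * (a y)\<^sup>2) + 2 * (\<Sum>y\<in>UNIV. m y * a y * d y) + (\<Sum>y\<in>UNIV. m y * (d y)\<^sup>2)"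
    by (simp add: power2_eq_square algebra_simps sum.distrib sum_distrib_left)
  have e2: "(\<Sum>y\<in>UNIV. m y * (a y + d y)) = (\<Sum>y\<in>UNIV. m y * a y) + (\<Sum>y\<in>UNIV. m y * d y)"
    by (simp add: algebra_simps sum.distrib)
  have e3: "(\<Sum>y\<in>UNIV. (2 * m y * a y - 2 * (\<Sum>z\<in>UNIV. m z * a z) * m y) * d y)
     = 2 * (\<Sum>y\<in>UNIV. m y * a y * d y) - 2 * (\<Sum>z\<in>UNIV. m z * a z) * (\<Sum>y\<in>UNIV. m y * d y)"
  proof -
    let ?S = "\<Sum>z\<in>UNIV. m z * a z"
    have "(\<Sum>y\<in>UNIV. (2 * m y * a y - 2 * ?S * m y) * d y)
       = (\<Sum>y\<in>UNIV. 2 * (m y * a y * d y) - (2 * ?S) * (m y * d y))"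
      by (intro sum.cong refl) (simp add: algebra_simps)
    also have "\<dots> = 2 * (\<Sum>y\<in>UNIV. m y * a y * d y) - (2 * ?S) * (\<Sum>y\<in>UNIV. m y * d y)"
      by (simp add: sum_subtractf sum_distrib_left)
    finally show ?thesis .
  qed
  show ?thesis unfolding vr_alt[OF assms] e1 e2 e3 by (simp add: power2_eq_square algebra_simps)
qed

definition bm :: "'w measure \<Rightarrow> ('w \<Rightarrow> real) \<Rightarrow> bool" where
  "bm M f \<longleftrightarrow> f \<in> borel_measurable M \<and> (\<exists>B. \<forall>x\<in>space M. \<bar>f x\<bar> \<le> B)"

lemma bm_const[intro]: "bm M (\<lambda>x. c)"
  unfolding bm_def by auto

lemma bm_add[intro]: "bm M f \<Longrightarrow> bm M g \<Longrightarrow> bm M (\<lambda>x. f x + g x)"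
  unfolding bm_def
proof (elim conjE exE, intro conjI)
  fix B1 B2 assume "\<forall>x\<in>space M. \<bar>f x\<bar> \<le> B1" "\<forall>x\<in>space M. \<bar>g x\<bar> \<le> B2"
  then show "\<exists>B. \<forall>x\<in>space M. \<bar>f x + g x\<bar> \<le> B"
    by (intro exI[of _ "B1 + B2"]) (auto intro: order_trans[OF abs_triangle_ineq] add_mono)
qed auto

lemma bm_diff[intro]: "bm M f \<Longrightarrow> bm M g \<Longrightarrow> bm M (\<lambda>x. f x - g x)"
  unfolding bm_def
proof (elim conjE exE, intro conjI)
  fix B1 B2 assume "\<forall>x\<in>space M. \<bar>f x\<bar> \<le> B1" "\<forall>x\<in>space M. \<bar>g x\<bar> \<le> B2"
  then show "\<exists>B. \<forall>x\<in>space M. \<bar>f x - g x\<bar> \<le> B"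
    by (intro exI[of _ "B1 + B2"]) (auto intro: order_trans[OF abs_triangle_ineq4] add_mono)
qed auto

lemma bm_mult[intro]: "bm M f \<Longrightarrow> bm M g \<Longrightarrow> bm M (\<lambda>x. f x * g x)"
  unfolding bm_def
proof (elim conjE exE, intro conjI)
  fix B1 B2 assume b: "\<forall>x\<in>space M. \<bar>f x\<bar> \<le> B1" "\<forall>x\<in>space M. \<bar>g x\<bar> \<le> B2"
  show "\<exists>B. \<forall>x\<in>space M. \<bar>f x * g x\<bar> \<le> B"
  proof (intro exI[of _ "B1 * B2"] ballI)
    fix x assume "x \<in> space M"
    with b have "\<bar>f x\<bar> \<le> B1" "\<bar>g x\<bar> \<le> B2" by auto
    then show "\<bar>f x * g x\<bar> \<le> B1 * B2" unfolding abs_mult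
      by (intro mult_mono) auto
  qed
qed auto

lemma bm_power[intro]: "bm M f \<Longrightarrow> bm M (\<lambda>x. (f x)\<^sup>2)"
  unfolding power2_eq_square by (rule bm_mult)

lemma bm_sum[intro]: "(\<And>i. i \<in> I \<Longrightarrow> bm M (f i)) \<Longrightarrow> bm M (\<lambda>x. \<Sum>i\<in>I. f i x)"
proof (induction I rule: infinite_finite_induct)
  case (insert i I) then show ?case using bm_add[of M "f i" "\<lambda>x. \<Sum>i\<in>I. f i x"] by simp
qed auto

lemma bm_integrable: "finite_measure M \<Longrightarrow> bm M f \<Longrightarrow> integrable M f"
  unfolding bm_def
proof (elim conjE exE)
  fix B assume "finite_measure M" "f \<in> borel_measurable M" "\<forall>x\<in>space M. \<bar>f x\<bar> \<le> B"
  then show "integrable M f"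
    by (intro finite_measure.integrable_const_bound[where B=B]) auto
qed

lemma jensen_vr:
  fixes F :: "'w \<Rightarrow> 's::finite \<Rightarrow> real"
  assumes M: "prob_space M" and F: "\<And>y. bm M (\<lambda>\<omega>. F \<omega> y)"
    and m: "\<And>y. 0 \<le> m y" "sum m UNIV = 1"
  shows "vr m (\<lambda>y. \<integral>\<omega>. F \<omega> y \<partial>M) \<le> (\<integral>\<omega>. vr m (F \<omega>) \<partial>M)"
proof -
  interpret prob_space M by fact
  have fm: "finite_measure M" by unfold_locales
  define Fb where "Fb y = (\<integral>\<omega>. F \<omega> y \<partial>M)" for y
  define D where "D \<omega> y = F \<omega> y - Fb y" for \<omega> y
  define c where "c y = 2 * m y * Fb y - 2 * (\<Sum>z\<in>UNIV. m z * Fb z) * m y" for y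
  have D: "bm M (\<lambda>\<omega>. D \<omega> y)" for y unfolding D_def using F by auto
  have D0: "(\<integral>\<omega>. D \<omega> y \<partial>M) = 0" for y
    unfolding D_def Fb_def using bm_integrable[OF fm F] by (simp add: prob_space)
  have eq: "vr m (F \<omega>) = vr m Fb + vr m (D \<omega>) + (\<Sum>y\<in>UNIV. c y * D \<omega> y)" for \<omega>
  proof -
    have "F \<omega> = (\<lambda>y. Fb y + D \<omega> y)" unfolding D_def by auto
    then show ?thesis using vr_decomp[OF m(2), of Fb "D \<omega>"] unfolding c_def by simp
  qed
  have bvr: "bm M (\<lambda>\<omega>. vr m (D \<omega>))" unfolding vr_def using D by (intro bm_sum bm_mult bm_power bm_diff) auto
  have bL: "bm M (\<lambda>\<omega>. \<Sum>y\<in>UNIV. c y * D \<omega> y)" using D by (intro bm_sum bm_mult) auto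
  have "(\<integral>\<omega>. vr m (F \<omega>) \<partial>M) = (\<integral>\<omega>. vr m Fb + vr m (D \<omega>) + (\<Sum>y\<in>UNIV. c y * D \<omega> y) \<partial>M)"
    unfolding eq ..
  also have "\<dots> = vr m Fb + (\<integral>\<omega>. vr m (D \<omega>) \<partial>M) + (\<integral>\<omega>. (\<Sum>y\<in>UNIV. c y * D \<omega> y) \<partial>M)"
    using bm_integrable[OF fm bvr] bm_integrable[OF fm bL] by (simp add: prob_space)
  also have "(\<integral>\<omega>. (\<Sum>y\<in>UNIV. c y * D \<omega> y) \<partial>M) = 0"
    using bm_integrable[OF fm D] D0 by (simp add: integral_sum)
  finally have I: "(\<integral>\<omega>. vr m (F \<omega>) \<partial>M) = vr m Fb + (\<integral>\<omega>. vr m (D \<omega>) \<partial>M)" by simp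
  have "0 \<le> (\<integral>\<omega>. vr m (D \<omega>) \<partial>M)" by (intro integral_nonneg_AE AE_I2 vr_nonneg m)
  then show ?thesis unfolding Fb_def[symmetric] I by simp
qed



lemma row_meas: "(\<lambda>row. row a y) \<in> borel_measurable (PiM UNIV (\<lambda>_. PiM UNIV (\<lambda>_. borel)) :: ('a \<Rightarrow> 's \<Rightarrow> real) measure)"
  using measurable_comp[OF measurable_component_singleton[of a UNIV "\<lambda>_. PiM UNIV (\<lambda>_. borel)"] measurable_component_singleton[of y UNIV "\<lambda>_. borel"]]
  by (simp add: comp_def)

lemma rowU_meas: "x \<in> U \<Longrightarrow> (\<lambda>z. z x a y) \<in> borel_measurable (PiM U (\<lambda>_. PiM UNIV (\<lambda>_. PiM UNIV (\<lambda>_. borel))) :: ('x \<Rightarrow> 'a \<Rightarrow> 's \<Rightarrow> real) measure)"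
  using measurable_comp[OF measurable_component_singleton[of x U] row_meas] by (simp add: comp_def)

theorem lemma7:
  fixes M :: "'w measure"
    and P :: "'w \<Rightarrow> 's::finite \<Rightarrow> 'a::finite \<Rightarrow> 's \<Rightarrow> real"
    and r :: "'s \<Rightarrow> 'a \<Rightarrow> real"
    and \<gamma> :: real
    and \<pi> :: "'s \<Rightarrow> 'a \<Rightarrow> real"
    and s :: 's
  assumes "prob_space M"
    and "\<And>x a y. (\<lambda>\<omega>. P \<omega> x a y) \<in> borel_measurable M"
    and "\<forall>\<omega>\<in>space M. valid_transition (P \<omega>)"
    and "0 \<le> \<gamma>" and "\<gamma> < 1"
    and "valid_policy \<pi>"
    and A1: "indep_transitions M P"
    and A2: "acyclic_mdp M P"
  shows "(\<integral>\<omega>. var_next \<pi> (P \<omega>) (value_fun r \<gamma> \<pi> (P \<omega>)) s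
              - var_next \<pi> (P \<omega>) (\<lambda>s'. \<integral>\<omega>'. value_fun r \<gamma> \<pi> (P \<omega>') s' \<partial>M) s \<partial>M) \<ge> 0"
proof -
  interpret prob_space M by fact
  have fm: "finite_measure M" by unfold_locales
  note Pm = assms(2)
  have valid: "valid_transition (P \<omega>)" if "\<omega> \<in> space M" for \<omega> using assms(3) that by auto
  have Pnn: "0 \<le> P \<omega> x a y" if "\<omega> \<in> space M" for \<omega> x a y
    using valid[OF that] unfolding valid_transition_def by auto
  have Ple: "P \<omega> x a y \<le> 1" if "\<omega> \<in> space M" for \<omega> x a y
    using trans_le1[OF valid[OF that]] .
  have Psum: "(\<Sum>y\<in>UNIV. P \<omega> x a y) = 1" if "\<omega> \<in> space M" for \<omega> x a
    using valid[OF that] unfolding valid_transition_def by auto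
  have pol: "0 \<le> \<pi> x a" "(\<Sum>a\<in>UNIV. \<pi> x a) = 1" for x a
    using assms(6) unfolding valid_policy_def by auto
  have bmP: "bm M (\<lambda>\<omega>. P \<omega> x a y)" for x a y
    unfolding bm_def using Pm Pnn Ple by (intro conjI exI[of _ 1]) (auto simp: abs_le_iff intro: order_trans[of _ 0])
  define mu where "mu \<omega> y = (\<Sum>a\<in>UNIV. \<pi> s a * P \<omega> s a y)" for \<omega> y
  define V where "V \<omega> y = value_fun r \<gamma> \<pi> (P \<omega>) y" for \<omega> y
  define Vb where "Vb y = (\<integral>\<omega>. V \<omega> y \<partial>M)" for y
  have bmmu: "bm M (\<lambda>\<omega>. mu \<omega> y)" for y unfolding mu_def using bmP by (intro bm_sum bm_mult bm_const) auto
  have bmV: "bm M (\<lambda>\<omega>. V \<omega> y)" for y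
    unfolding bm_def V_def
  proof (intro conjI exI[of _ "rbound r / (1 - \<gamma>)"] ballI)
    show "(\<lambda>\<omega>. value_fun r \<gamma> \<pi> (P \<omega>) y) \<in> borel_measurable M"
      by (rule value_fun_meas[of P, OF Pm])
  qed (rule value_fun_bound[OF assms(6) valid assms(4,5)])
  have munn: "0 \<le> mu \<omega> y" if "\<omega> \<in> space M" for \<omega> y
    unfolding mu_def using pol Pnn[OF that] by (intro sum_nonneg) auto
  have musum: "sum (mu \<omega>) UNIV = 1" if "\<omega> \<in> space M" for \<omega>
  proof -
    have "sum (mu \<omega>) UNIV = (\<Sum>a\<in>UNIV. \<pi> s a * (\<Sum>y\<in>UNIV. P \<omega> s a y))"
      unfolding mu_def by (subst sum.swap) (simp add: sum_distrib_left)
    then show ?thesis using Psum[OF that] pol by simp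
  qed
  have goal_eq: "(\<integral>\<omega>. var_next \<pi> (P \<omega>) (value_fun r \<gamma> \<pi> (P \<omega>)) s
              - var_next \<pi> (P \<omega>) (\<lambda>s'. \<integral>\<omega>'. value_fun r \<gamma> \<pi> (P \<omega>') s' \<partial>M) s \<partial>M)
     = (\<integral>\<omega>. vr (mu \<omega>) (V \<omega>) - vr (mu \<omega>) Vb \<partial>M)"
    unfolding var_next_vr mu_def[abs_def] V_def[abs_def] Vb_def by simp
  show ?thesis
  proof (cases "terminal_state M P s")
    case True
    have z: "vr (mu \<omega>) f = 0" if "\<omega> \<in> space M" for \<omega> f
    proof -
      have Pss: "P \<omega> s a s = 1" for a using True that unfolding terminal_state_def by auto
      have P0: "P \<omega> s a y = 0" if "y \<noteq> s" for a y
      proof -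
        have "(\<Sum>y\<in>UNIV. P \<omega> s a y) = P \<omega> s a s + (\<Sum>y\<in>UNIV-{s}. P \<omega> s a y)"
          by (simp add: sum.remove)
        then have "(\<Sum>y\<in>UNIV-{s}. P \<omega> s a y) = 0" using Psum[OF \<open>\<omega> \<in> space M\<close>] Pss by simp
        then have "\<forall>y\<in>UNIV-{s}. P \<omega> s a y = 0"
          using sum_nonneg_eq_0_iff[of "UNIV-{s}" "P \<omega> s a"] Pnn[OF \<open>\<omega> \<in> space M\<close>] by auto
        then show ?thesis using that by auto
      qed
      have "mu \<omega> y = (if y = s then 1 else 0)" for y
        using Pss P0 pol unfolding mu_def by auto
      then show ?thesis unfolding vr_def by (simp add: if_distrib[of "\<lambda>c. c * _"] cong: if_cong)
    qed
    have "(\<integral>\<omega>. vr (mu \<omega>) (V \<omega>) - vr (mu \<omega>) Vb \<partial>M) = (\<integral>\<omega>. 0 \<partial>M)"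
      by (rule Bochner_Integration.integral_cong) (auto simp: z)
    then show ?thesis unfolding goal_eq by simp
  next
    case False
    from A2 obtain \<rho> :: "'s \<Rightarrow> nat" where rho: "\<forall>\<omega>\<in>space M. \<forall>x a y. 0 < P \<omega> x a y \<longrightarrow> \<rho> x < \<rho> y \<or> (y = x \<and> terminal_state M P x)"
      unfolding acyclic_mdp_def by blast
    define U where "U = {y. \<rho> s < \<rho> y}"
    have sU: "s \<notin> U" by (simp add: U_def)
    have Pout: "P \<omega> s a y = 0" if "\<omega> \<in> space M" "y \<notin> U" for \<omega> a y
    proof (rule ccontr)
      assume "P \<omega> s a y \<noteq> 0"
      then have "0 < P \<omega> s a y" using Pnn[OF that(1), of s a y] by simp
      then have "\<rho> s < \<rho> y \<or> (y = s \<and> terminal_state M P s)" using rho that(1) by blast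
      then show False using False that(2) unfolding U_def by auto
    qed
    have mu0: "mu \<omega> y = 0" if "\<omega> \<in> space M" "y \<notin> U" for \<omega> y
      unfolding mu_def using Pout[OF that] by simp
    have closed: "\<forall>x\<in>U. \<forall>a y. P \<omega> x a y \<noteq> 0 \<longrightarrow> y \<in> U" if "\<omega> \<in> space M" for \<omega>
    proof (intro ballI allI impI)
      fix x a y assume x: "x \<in> U" and ne: "P \<omega> x a y \<noteq> 0"
      then have "0 < P \<omega> x a y" using Pnn[OF that, of x a y] by simp
      then have "\<rho> x < \<rho> y \<or> y = x" using rho that by blast
      then show "y \<in> U" using x unfolding U_def by auto
    qed
    define N where "N = (PiM UNIV (\<lambda>_. PiM UNIV (\<lambda>_. borel)) :: ('a \<Rightarrow> 's \<Rightarrow> real) measure)"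
    define pU where "pU z = (\<lambda>x. if x \<in> U then z x else (\<lambda>_ _. 0::real))" for z :: "'s \<Rightarrow> 'a \<Rightarrow> 's \<Rightarrow> real"
    define G where "G y z = value_fun r \<gamma> \<pi> (pU z) y" for y z
    define XU where "XU \<omega> = restrict (\<lambda>i. P \<omega> i) U" for \<omega>
    define Xs where "Xs \<omega> = restrict (\<lambda>i. P \<omega> i) {s}" for \<omega>
    have VG: "V \<omega> y = G y (XU \<omega>)" if "\<omega> \<in> space M" "y \<in> U" for \<omega> y
      unfolding V_def G_def
      by (rule value_fun_agree[where U=U]) (use closed[OF that(1)] that in \<open>auto simp: pU_def XU_def\<close>)
    have Gm: "G y \<in> borel_measurable (PiM U (\<lambda>_. N))" for y
      unfolding G_def
    proof (rule value_fun_meas)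
      fix x a y'
      show "(\<lambda>z. pU z x a y') \<in> borel_measurable (PiM U (\<lambda>_. N))"
        by (cases "x \<in> U") (simp_all add: pU_def N_def rowU_meas)
    qed
    have ind: "indep_var (PiM {s} (\<lambda>_. N)) Xs (PiM U (\<lambda>_. N)) XU"
      unfolding Xs_def XU_def N_def
      using indep_var_restrict[of "\<lambda>_. N" "\<lambda>x \<omega>. P \<omega> x" UNIV "{s}" U] A1 sU
      unfolding indep_transitions_def N_def by auto
    have fac: "(\<integral>\<omega>. a (P \<omega> s) * (V \<omega> y * V \<omega> z) \<partial>M) = (\<integral>\<omega>. a (P \<omega> s) \<partial>M) * (\<integral>\<omega>. V \<omega> y * V \<omega> z \<partial>M)"
      if a: "a \<in> borel_measurable N" and ab: "bm M (\<lambda>\<omega>. a (P \<omega> s))" and yz: "y \<in> U" "z \<in> U" for a y z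
    proof -
      have m1: "(\<lambda>w. a (w s)) \<in> borel_measurable (PiM {s} (\<lambda>_. N))"
        using measurable_comp[OF measurable_component_singleton[of s "{s}" "\<lambda>_. N"] a] by (simp add: comp_def)
      have m2: "(\<lambda>w. G y w * G z w) \<in> borel_measurable (PiM U (\<lambda>_. N))"
        using Gm by (intro borel_measurable_times) auto
      have i: "indep_var borel ((\<lambda>w. a (w s)) \<circ> Xs) borel ((\<lambda>w. G y w * G z w) \<circ> XU)"
        by (rule indep_var_compose[OF ind m1 m2])
      have e1: "((\<lambda>w. a (w s)) \<circ> Xs) = (\<lambda>\<omega>. a (P \<omega> s))" by (auto simp: Xs_def)
      have e2: "((\<lambda>w. G y w * G z w) \<circ> XU) \<omega> = V \<omega> y * V \<omega> z" if "\<omega> \<in> space M" for \<omega>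
        using VG[OF that yz(1)] VG[OF that yz(2)] by simp
      have int2: "integrable M (\<lambda>\<omega>. V \<omega> y * V \<omega> z)" using bmV by (intro bm_integrable[OF fm] bm_mult)
      have int2': "integrable M ((\<lambda>w. G y w * G z w) \<circ> XU)"
      proof -
        have "integrable M ((\<lambda>w. G y w * G z w) \<circ> XU) = integrable M (\<lambda>\<omega>. V \<omega> y * V \<omega> z)"
          by (rule Bochner_Integration.integrable_cong) (auto simp: e2 simp del: comp_apply)
        then show ?thesis using int2 by simp
      qed
      have int1: "integrable M (\<lambda>\<omega>. a (P \<omega> s))" by (rule bm_integrable[OF fm ab])
      have "(\<integral>\<omega>. a (P \<omega> s) * (V \<omega> y * V \<omega> z) \<partial>M) = (\<integral>\<omega>. ((\<lambda>w. a (w s)) \<circ> Xs) \<omega> * ((\<lambda>w. G y w * G z w) \<circ> XU) \<omega> \<partial>M)"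
        by (rule Bochner_Integration.integral_cong) (auto simp: e1 e2 simp del: comp_apply)
      also have "\<dots> = (\<integral>\<omega>. ((\<lambda>w. a (w s)) \<circ> Xs) \<omega> \<partial>M) * (\<integral>\<omega>. ((\<lambda>w. G y w * G z w) \<circ> XU) \<omega> \<partial>M)"
        by (rule indep_var_lebesgue_integral[OF i]) (use int1 int2' e1 in auto)
      also have "(\<integral>\<omega>. ((\<lambda>w. G y w * G z w) \<circ> XU) \<omega> \<partial>M) = (\<integral>\<omega>. V \<omega> y * V \<omega> z \<partial>M)"
        by (rule Bochner_Integration.integral_cong) (auto simp: e2 simp del: comp_apply)
      finally show ?thesis by (simp add: e1)
    qed
    define ma where "ma y row = (\<Sum>a\<in>UNIV. \<pi> s a * row a y)" for y and row :: "'a \<Rightarrow> 's \<Rightarrow> real"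
    have mam: "ma y \<in> borel_measurable N" for y
      unfolding ma_def[abs_def] N_def by (intro borel_measurable_sum borel_measurable_times borel_measurable_const row_meas)
    have muma: "mu \<omega> y = ma y (P \<omega> s)" for \<omega> y unfolding mu_def ma_def ..
    have intV: "integrable M (\<lambda>\<omega>. V \<omega> y * V \<omega> z)" for y z using bmV by (intro bm_integrable[OF fm] bm_mult)
    have intmu1: "integrable M (\<lambda>\<omega>. mu \<omega> y)" for y using bmmu by (intro bm_integrable[OF fm])
    have intmu2: "integrable M (\<lambda>\<omega>. mu \<omega> y * mu \<omega> z)" for y z using bmmu by (intro bm_integrable[OF fm] bm_mult)
    have F1: "(\<integral>\<omega>. mu \<omega> y * (V \<omega> y * V \<omega> y) \<partial>M) = (\<integral>\<omega>. mu \<omega> y \<partial>M) * (\<integral>\<omega>. V \<omega> y * V \<omega> y \<partial>M)" for y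
    proof (cases "y \<in> U")
      case True then show ?thesis using fac[OF mam[of y], of y y] bmmu unfolding muma by simp
    next
      case False
      have "(\<integral>\<omega>. mu \<omega> y * (V \<omega> y * V \<omega> y) \<partial>M) = (\<integral>\<omega>. 0 \<partial>M)" "(\<integral>\<omega>. mu \<omega> y \<partial>M) = (\<integral>\<omega>. 0 \<partial>M)"
        by (rule Bochner_Integration.integral_cong; simp add: mu0 False)+
      then show ?thesis by simp
    qed
    have F2: "(\<integral>\<omega>. (mu \<omega> y * mu \<omega> z) * (V \<omega> y * V \<omega> z) \<partial>M) = (\<integral>\<omega>. mu \<omega> y * mu \<omega> z \<partial>M) * (\<integral>\<omega>. V \<omega> y * V \<omega> z \<partial>M)" for y z
    proof (cases "y \<in> U \<and> z \<in> U")
      case True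
      have m: "(\<lambda>row. ma y row * ma z row) \<in> borel_measurable N" using mam by (intro borel_measurable_times) auto
      have b: "bm M (\<lambda>\<omega>. ma y (P \<omega> s) * ma z (P \<omega> s))" using bmmu unfolding muma by (intro bm_mult)
      show ?thesis using fac[OF m b, of y z] True unfolding muma by simp
    next
      case False
      then have z: "mu \<omega> y * mu \<omega> z = 0" if "\<omega> \<in> space M" for \<omega> using mu0[OF that] by auto
      have "(\<integral>\<omega>. (mu \<omega> y * mu \<omega> z) * (V \<omega> y * V \<omega> z) \<partial>M) = (\<integral>\<omega>. 0 \<partial>M)" "(\<integral>\<omega>. mu \<omega> y * mu \<omega> z \<partial>M) = (\<integral>\<omega>. 0 \<partial>M)"
        by (rule Bochner_Integration.integral_cong; simp add: z)+
      then show ?thesis by simp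
    qed
    define C where "C y z = (\<integral>\<omega>. V \<omega> y * V \<omega> z \<partial>M)" for y z
    define K where "K m = (\<Sum>y\<in>UNIV. m y * C y y) - (\<Sum>y\<in>UNIV. \<Sum>z\<in>UNIV. m y * m z * C y z)" for m
    have vrV: "vr m (V \<omega>) = (\<Sum>y\<in>UNIV. m y * (V \<omega> y * V \<omega> y)) - (\<Sum>y\<in>UNIV. \<Sum>z\<in>UNIV. m y * m z * (V \<omega> y * V \<omega> z))"
      if "sum m UNIV = 1" for m \<omega>
      using vr_alt[OF that] sq_sum[of m "V \<omega>"] by (simp add: power2_eq_square)
    have Kint: "(\<integral>\<omega>. vr m (V \<omega>) \<partial>M) = K m" if "sum m UNIV = 1" for m
      unfolding vrV[OF that] K_def C_def
      using intV by (simp add: integral_diff integral_sum integrable_sum)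
    have pt: "vr (mu \<omega>) Vb \<le> K (mu \<omega>)" if "\<omega> \<in> space M" for \<omega>
      using jensen_vr[OF assms(1), of V "mu \<omega>", OF bmV] munn[OF that] musum[OF that] Kint[OF musum[OF that]]
      unfolding Vb_def by simp
    have E1: "(\<integral>\<omega>. vr (mu \<omega>) (V \<omega>) \<partial>M) = (\<integral>\<omega>. K (mu \<omega>) \<partial>M)"
    proof -
      have "(\<integral>\<omega>. vr (mu \<omega>) (V \<omega>) \<partial>M) = (\<integral>\<omega>. (\<Sum>y\<in>UNIV. mu \<omega> y * (V \<omega> y * V \<omega> y)) - (\<Sum>y\<in>UNIV. \<Sum>z\<in>UNIV. (mu \<omega> y * mu \<omega> z) * (V \<omega> y * V \<omega> z)) \<partial>M)"
        by (rule Bochner_Integration.integral_cong) (auto simp: vrV musum)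
      also have "\<dots> = (\<Sum>y\<in>UNIV. (\<integral>\<omega>. mu \<omega> y * (V \<omega> y * V \<omega> y) \<partial>M)) - (\<Sum>y\<in>UNIV. \<Sum>z\<in>UNIV. (\<integral>\<omega>. (mu \<omega> y * mu \<omega> z) * (V \<omega> y * V \<omega> z) \<partial>M))"
      proof -
        have i1: "integrable M (\<lambda>\<omega>. mu \<omega> y * (V \<omega> y * V \<omega> y))" for y
          using bmmu bmV by (intro bm_integrable[OF fm] bm_mult)
        have i2: "integrable M (\<lambda>\<omega>. (mu \<omega> y * mu \<omega> z) * (V \<omega> y * V \<omega> z))" for y z
          using bmmu bmV by (intro bm_integrable[OF fm] bm_mult)
        show ?thesis using i1 i2 by (simp add: integral_diff integral_sum integrable_sum)
      qed
      also have "\<dots> = (\<Sum>y\<in>UNIV. (\<integral>\<omega>. mu \<omega> y \<partial>M) * C y y) - (\<Sum>y\<in>UNIV. \<Sum>z\<in>UNIV. (\<integral>\<omega>. mu \<omega> y * mu \<omega> z \<partial>M) * C y z)"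
        unfolding F1 F2 C_def ..
      also have "\<dots> = (\<integral>\<omega>. K (mu \<omega>) \<partial>M)"
        unfolding K_def using intmu1 intmu2
        by (simp add: integral_diff integral_sum integrable_sum)
      finally show ?thesis .
    qed
    have bK: "bm M (\<lambda>\<omega>. K (mu \<omega>))" unfolding K_def using bmmu by (intro bm_sum bm_diff bm_mult bm_const) auto
    have bvV: "bm M (\<lambda>\<omega>. vr (mu \<omega>) (V \<omega>))" unfolding vr_def using bmmu bmV
      by (intro bm_sum bm_diff bm_mult bm_power bm_const) auto
    have bvb: "bm M (\<lambda>\<omega>. vr (mu \<omega>) Vb)" unfolding vr_def using bmmu
      by (intro bm_sum bm_diff bm_mult bm_power bm_const) auto
    have "(\<integral>\<omega>. vr (mu \<omega>) (V \<omega>) - vr (mu \<omega>) Vb \<partial>M) = (\<integral>\<omega>. K (mu \<omega>) \<partial>M) - (\<integral>\<omega>. vr (mu \<omega>) Vb \<partial>M)"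
      using bm_integrable[OF fm bvV] bm_integrable[OF fm bvb] E1 by simp
    also have "\<dots> \<ge> 0"
      using integral_mono[OF bm_integrable[OF fm bvb] bm_integrable[OF fm bK] pt] by simp
    finally show ?thesis unfolding goal_eq by simp
  qed
qed

end
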